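(* Let $X$ be a topological space, $(Z,d)$ a bounded metric space, $F:X\to 2^Z$ a lower quasicontinuous set-valued mapping, and $z_0\in Z$. Then the mapping $\phi:X\to\mathbb R$, $\phi(x)=\sup\{d(z_0,z):z\in F(x)\}$, is cliquish.
   Context: $2^Z$ is the set of nonempty subsets of $Z$. $F:X\to 2^Z$ is lower quasicontinuous if for each $x_0\in X$, each neighborhood $U$ of $x_0$ and each open $W\subset Z$ with $F(x_0)\cap W\ne\emptyset$, there is an open $O$ with $\emptyset\ne O\subset U$ and $F(x)\cap W\ne\emptyset$ for all $x\in O$. A mapping $g$ from $X$ into a metric space is cliquish at $a$ if for each $\varepsilon>0$ and each neighborhood $U$ of $a$ there is an open $O$ with $\emptyset\ne O\subset U$ and $\mathrm{diam}(g(O))\le\varepsilon$; cliquish means cliquish at every point. $\mathrm{diam}(W)=\sup\{d(u,v):u,v\in W\}$. *)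

theory Defs
  imports "HOL-Analysis.Analysis"
begin

definition nbhd :: "'a::topological_space set \<Rightarrow> 'a \<Rightarrow> bool" where
  "nbhd U x \<longleftrightarrow> (\<exists>V. open V \<and> x \<in> V \<and> V \<subseteq> U)"

definition lower_quasicontinuous ::
  "('a::topological_space \<Rightarrow> 'b::topological_space set) \<Rightarrow> bool" where
  "lower_quasicontinuous F \<longleftrightarrow>
     (\<forall>x0 U W. nbhd U x0 \<and> open W \<and> F x0 \<inter> W \<noteq> {} \<longrightarrow>
        (\<exists>Ob. open Ob \<and> Ob \<noteq> {} \<and> Ob \<subseteq> U \<and> (\<forall>x\<in>Ob. F x \<inter> W \<noteq> {})))"

definition cliquish_at :: "('a::topological_space \<Rightarrow> 'b::metric_space) \<Rightarrow> 'a \<Rightarrow> bool" where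
  "cliquish_at g a \<longleftrightarrow>
     (\<forall>\<epsilon>>0. \<forall>U. nbhd U a \<longrightarrow>
        (\<exists>Ob. open Ob \<and> Ob \<noteq> {} \<and> Ob \<subseteq> U \<and> diameter (g ` Ob) \<le> \<epsilon>))"

definition cliquish :: "('a::topological_space \<Rightarrow> 'b::metric_space) \<Rightarrow> bool" where
  "cliquish g \<longleftrightarrow> (\<forall>a. cliquish_at g a)"

end

theory Submission
  imports Defs
begin

theorem lemma3p1:
  fixes F :: "'a::topological_space \<Rightarrow> 'b::metric_space set"
    and z0 :: 'b
  assumes "bounded (UNIV :: 'b set)"
    and "\<And>x. F x \<noteq> {}"
    and "lower_quasicontinuous F"
  shows "cliquish (\<lambda>x. Sup ((\<lambda>z. dist z0 z) ` F x))"
proof -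
  define \<phi> where "\<phi> = (\<lambda>x. Sup ((\<lambda>z. dist z0 z) ` F x))"
  obtain B where B: "\<And>z. dist z0 z \<le> B"
    using assms(1) unfolding bounded_any_center[where a=z0] by blast
  have bdd: "bdd_above ((\<lambda>z. dist z0 z) ` F x)" for x
    using B by (intro bdd_aboveI2) auto
  have ge: "dist z0 z \<le> \<phi> x" if "z \<in> F x" for x z
    unfolding \<phi>_def using bdd that by (intro cSUP_upper) auto
  have phiB: "\<phi> x \<le> B" for x
    unfolding \<phi>_def using assms(2) B by (intro cSUP_least) auto
  have approx: "\<exists>z\<in>F x. dist z0 z > \<phi> x - d" if "d > 0" for x d
  proof (rule ccontr)
    assume "\<not> ?thesis"
    hence "\<forall>z\<in>F x. dist z0 z \<le> \<phi> x - d" by (simp add: not_less)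
    hence "\<phi> x \<le> \<phi> x - d" unfolding \<phi>_def using assms(2)
      by (intro cSUP_least) (simp_all add: \<phi>_def)
    thus False using that by simp
  qed
  have "cliquish_at \<phi> a" for a
    unfolding cliquish_at_def
  proof (intro allI impI)
    fix \<epsilon> :: real and U assume e: "\<epsilon> > 0" and nU: "nbhd U a"
    then obtain V where V: "open V" "a \<in> V" "V \<subseteq> U" unfolding nbhd_def by blast
    define S where "S = Sup (\<phi> ` V)"
    have bddV: "bdd_above (\<phi> ` V)" using phiB by (intro bdd_aboveI2) auto
    have leS: "\<phi> x \<le> S" if "x \<in> V" for x
      unfolding S_def using bddV that by (intro cSUP_upper) auto
    have "\<exists>x0\<in>V. \<phi> x0 > S - \<epsilon>/8"
    proof (rule ccontr)
      assume "\<not> (\<exists>x0\<in>V. \<phi> x0 > S - \<epsilon>/8)"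
      hence "\<forall>x\<in>V. \<phi> x \<le> S - \<epsilon>/8" by (simp add: not_less)
      hence "S \<le> S - \<epsilon>/8" unfolding S_def using V(2) by (intro cSUP_least) auto
      thus False using e by simp
    qed
    then obtain x0 where x0: "x0 \<in> V" "\<phi> x0 > S - \<epsilon>/8" by blast
    obtain z where z: "z \<in> F x0" "dist z0 z > \<phi> x0 - \<epsilon>/8"
      using approx[of "\<epsilon>/8" x0] e by auto
    have nV: "nbhd V x0" unfolding nbhd_def using V x0 by blast
    have "F x0 \<inter> ball z (\<epsilon>/8) \<noteq> {}" using z e by auto
    then obtain Ob where Ob: "open Ob" "Ob \<noteq> {}" "Ob \<subseteq> V"
      "\<forall>x\<in>Ob. F x \<inter> ball z (\<epsilon>/8) \<noteq> {}"
      using assms(3)[unfolded lower_quasicontinuous_def, rule_format, of V x0 "ball z (\<epsilon>/8)"] nV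
      by auto
    have low: "\<phi> x \<ge> S - \<epsilon>/2" if xO: "x \<in> Ob" for x
    proof -
      have "F x \<inter> ball z (\<epsilon>/8) \<noteq> {}" using Ob(4) xO by blast
      then obtain w where w: "w \<in> F x" "w \<in> ball z (\<epsilon>/8)" by blast
      hence w2: "dist z w < \<epsilon>/8" by simp
      have "dist z0 z \<le> dist z0 w + dist z w" by (metis dist_commute dist_triangle)
      thus ?thesis using ge[OF w(1)] w2 z(2) x0(2) e by linarith
    qed
    have "diameter (\<phi> ` Ob) \<le> \<epsilon>"
    proof (rule diameter_le)
      show "\<phi> ` Ob \<noteq> {} \<or> 0 \<le> \<epsilon>" using e by simp
      fix u v assume "u \<in> \<phi> ` Ob" "v \<in> \<phi> ` Ob"
      then obtain x y where "x \<in> Ob" "y \<in> Ob" "u = \<phi> x" "v = \<phi> y" by auto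
      moreover have "x \<in> V" "y \<in> V" using calculation Ob(3) by auto
      ultimately show "norm (u - v) \<le> \<epsilon>"
        using low[of x] low[of y] leS[of x] leS[of y] by (simp add: abs_le_iff)
    qed
    thus "\<exists>Ob. open Ob \<and> Ob \<noteq> {} \<and> Ob \<subseteq> U \<and> diameter (\<phi> ` Ob) \<le> \<epsilon>"
      using Ob V(3) by blast
  qed
  thus ?thesis unfolding cliquish_def \<phi>_def by blast
qed

end
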